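(* With the notation of the context, for all fixed frequencies, $$|S^{\rm bad}_{kk_2}|\lesssim(N_1\wedge N_3)^{1-\frac\alpha2},\qquad |S^{\rm bad}_{k_1k_3}|\lesssim(N\wedge N_2)^{1-\frac\alpha2};$$ consequently $|S_{kk_2}|\lesssim(N_1\wedge N_3)^{1-\frac\alpha2}$ and $|S_{k_1k_3}|\lesssim(N\wedge N_2)^{1-\frac\alpha2}$.
   Context: Fix $\alpha\in(1,2)$, dyadic numbers $1\le N_1,N_2,N_3\le N$, a real number $m$ and a constant $C_0>0$. Let $S$ be the set of $(k,k_1,k_2,k_3)\in\mathbb Z^4$ with $k=k_1-k_2+k_3$, $k_2\notin\{k_1,k_3\}$, $\big||k_1|^\alpha-|k_2|^\alpha+|k_3|^\alpha-|k|^\alpha-m\big|\le C_0$, $|k|\le N$ and $|k_j|\le N_j$ for $j=1,2,3$. Let $S_{k_1k_3}=\{(k,k_2):(k,k_1,k_2,k_3)\in S\}$ and $S_{kk_2}=\{(k_1,k_3):(k,k_1,k_2,k_3)\in S\}$. Fix a small absolute constant $c\in(0,1)$ and set $S^{\rm bad}_{k_1k_3}=\{(k,k_2)\in S_{k_1k_3}:|2k-(k_1+k_3)|<c|k_1+k_3|\}$, $S^{\rm good}_{k_1k_3}=S_{k_1k_3}\setminus S^{\rm bad}_{k_1k_3}$, $S^{\rm bad}_{kk_2}=\{(k_1,k_3)\in S_{kk_2}:|2k_1-(k+k_2)|<c|k+k_2|\}$, $S^{\rm good}_{kk_2}=S_{kk_2}\setminus S^{\rm bad}_{kk_2}$. $|A|$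 is cardinality, $a\wedge b=\min(a,b)$. $A\lesssim B$ means $A\le CB$ with $C$ depending only on $\alpha$, $c$ and $C_0$. *)

theory Defs
  imports Complex_Main
begin

definition dyadic :: "real \<Rightarrow> bool" where
  "dyadic x \<longleftrightarrow> (\<exists>n::nat. x = 2 ^ n)"

definition Sset :: "real \<Rightarrow> real \<Rightarrow> real \<Rightarrow> real \<Rightarrow> real \<Rightarrow> real \<Rightarrow> real
    \<Rightarrow> (int \<times> int \<times> int \<times> int) set" where
  "Sset \<alpha> N N1 N2 N3 m C0 = {(k, k1, k2, k3).
      k = k1 - k2 + k3 \<and> k2 \<noteq> k1 \<and> k2 \<noteq> k3 \<and>
      \<bar>\<bar>real_of_int k1\<bar> powr \<alpha> - \<bar>real_of_int k2\<bar> powr \<alpha> + \<bar>real_of_int k3\<bar> powr \<alpha>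
        - \<bar>real_of_int k\<bar> powr \<alpha> - m\<bar> \<le> C0 \<and>
      \<bar>real_of_int k\<bar> \<le> N \<and> \<bar>real_of_int k1\<bar> \<le> N1 \<and>
      \<bar>real_of_int k2\<bar> \<le> N2 \<and> \<bar>real_of_int k3\<bar> \<le> N3}"

definition S_k1k3 :: "real \<Rightarrow> real \<Rightarrow> real \<Rightarrow> real \<Rightarrow> real \<Rightarrow> real \<Rightarrow> real
    \<Rightarrow> int \<Rightarrow> int \<Rightarrow> (int \<times> int) set" where
  "S_k1k3 \<alpha> N N1 N2 N3 m C0 k1 k3 = {(k, k2). (k, k1, k2, k3) \<in> Sset \<alpha> N N1 N2 N3 m C0}"

definition S_kk2 :: "real \<Rightarrow> real \<Rightarrow> real \<Rightarrow> real \<Rightarrow> real \<Rightarrow> real \<Rightarrow> real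
    \<Rightarrow> int \<Rightarrow> int \<Rightarrow> (int \<times> int) set" where
  "S_kk2 \<alpha> N N1 N2 N3 m C0 k k2 = {(k1, k3). (k, k1, k2, k3) \<in> Sset \<alpha> N N1 N2 N3 m C0}"

definition S_k1k3_bad :: "real \<Rightarrow> real \<Rightarrow> real \<Rightarrow> real \<Rightarrow> real \<Rightarrow> real \<Rightarrow> real \<Rightarrow> real
    \<Rightarrow> int \<Rightarrow> int \<Rightarrow> (int \<times> int) set" where
  "S_k1k3_bad c \<alpha> N N1 N2 N3 m C0 k1 k3 = {(k, k2) \<in> S_k1k3 \<alpha> N N1 N2 N3 m C0 k1 k3.
      real_of_int \<bar>2 * k - (k1 + k3)\<bar> < c * real_of_int \<bar>k1 + k3\<bar>}"

definition S_kk2_bad :: "real \<Rightarrow> real \<Rightarrow> real \<Rightarrow> real \<Rightarrow> real \<Rightarrow> real \<Rightarrow> real \<Rightarrow> real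
    \<Rightarrow> int \<Rightarrow> int \<Rightarrow> (int \<times> int) set" where
  "S_kk2_bad c \<alpha> N N1 N2 N3 m C0 k k2 = {(k1, k3) \<in> S_kk2 \<alpha> N N1 N2 N3 m C0 k k2.
      real_of_int \<bar>2 * k1 - (k + k2)\<bar> < c * real_of_int \<bar>k + k2\<bar>}"

end

theory Submission imports Defs "HOL-Analysis.Analysis" begin
lemma d0:
  fixes \<alpha> :: real assumes "1 < \<alpha>"
  shows "((\<lambda>x. \<bar>x\<bar> powr \<alpha>) has_real_derivative 0) (at 0)"
proof -
  have "((\<lambda>h. \<bar>h\<bar> powr (\<alpha> - 1)) \<longlongrightarrow> 0) (at (0::real))"
  proof -
    have "((\<lambda>h. \<bar>h\<bar> powr (\<alpha> - 1)) \<longlongrightarrow> \<bar>0\<bar> powr (\<alpha> - 1)) (at (0::real))"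
      using assms by (intro tendsto_intros) auto
    thus ?thesis by simp
  qed
  then have "((\<lambda>h. \<bar>(\<bar>h\<bar> powr \<alpha> - \<bar>0\<bar> powr \<alpha>) / h\<bar>) \<longlongrightarrow> 0) (at (0::real))"
  proof (rule tendsto_cong[THEN iffD1, rotated])
    show "\<forall>\<^sub>F h in at 0. \<bar>h\<bar> powr (\<alpha> - 1) = \<bar>(\<bar>h\<bar> powr \<alpha> - \<bar>0\<bar> powr \<alpha>) / h\<bar>"
      by (auto simp: eventually_at_filter powr_diff abs_divide)
  qed
  then show ?thesis unfolding DERIV_def
    by (subst tendsto_rabs_zero_iff[symmetric]) (simp add: abs_divide)
qed

lemma dpos:
  fixes \<alpha> x :: real assumes "0 < x"
  shows "((\<lambda>x. \<bar>x\<bar> powr \<alpha>) has_real_derivative \<alpha> * x powr (\<alpha> - 1)) (at x)"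
proof (rule has_field_derivative_transform_within_open[where S="{0<..}"])
  show "((\<lambda>x. x powr \<alpha>) has_real_derivative \<alpha> * x powr (\<alpha> - 1)) (at x)"
    using assms by (rule has_real_derivative_powr)
qed (use assms in auto)

lemma dneg:
  fixes \<alpha> x :: real assumes "x < 0"
  shows "((\<lambda>x. \<bar>x\<bar> powr \<alpha>) has_real_derivative - (\<alpha> * (-x) powr (\<alpha> - 1))) (at x)"
proof (rule has_field_derivative_transform_within_open[where S="{..<0}"])
  show "((\<lambda>x. (-x) powr \<alpha>) has_real_derivative - (\<alpha> * (-x) powr (\<alpha> - 1))) (at x)"
    using assms by (auto intro!: derivative_eq_intros)
qed (use assms in auto)

lemma qmono:
  fixes \<alpha> R x y :: real
  assumes "1 < \<alpha>" "\<alpha> < 2" "0 \<le> x" "x \<le> y" "y \<le> R"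
  shows "\<alpha> * x powr (\<alpha> - 1) - \<alpha>*(\<alpha>-1)*R powr (\<alpha>-2) * x \<le> \<alpha> * y powr (\<alpha> - 1) - \<alpha>*(\<alpha>-1)*R powr (\<alpha>-2) * y"
proof (rule DERIV_nonneg_imp_increasing_open[OF assms(4)])
  fix t assume t: "x < t" "t < y"
  have "DERIV (\<lambda>t. \<alpha> * t powr (\<alpha> - 1) - \<alpha>*(\<alpha>-1)*R powr (\<alpha>-2) * t) t :> \<alpha> * ((\<alpha>-1) * t powr (\<alpha> - 1 - 1)) - \<alpha>*(\<alpha>-1)*R powr (\<alpha>-2)"
    using t assms by (auto intro!: derivative_eq_intros)
  moreover have "t powr (\<alpha> - 2) \<ge> R powr (\<alpha> - 2)"
    using t assms by (intro powr_mono2') auto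
  then have "\<alpha>*(\<alpha>-1)*(t powr (\<alpha> - 2) - R powr (\<alpha> - 2)) \<ge> 0"
    using assms by simp
  then have "\<alpha> * ((\<alpha>-1) * t powr (\<alpha> - 1 - 1)) - \<alpha>*(\<alpha>-1)*R powr (\<alpha>-2) \<ge> 0"
    by (simp add: algebra_simps)
  ultimately show "\<exists>y. DERIV (\<lambda>t. \<alpha> * t powr (\<alpha> - 1) - \<alpha>*(\<alpha>-1)*R powr (\<alpha>-2) * t) t :> y \<and> 0 \<le> y"
    by blast
next
  show "continuous_on {x..y} (\<lambda>t. \<alpha> * t powr (\<alpha> - 1) - \<alpha>*(\<alpha>-1)*R powr (\<alpha>-2) * t)"
    using assms by (intro continuous_intros continuous_on_powr') auto
qed

lemma hconv:
  fixes \<alpha> R :: real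
  assumes "1 < \<alpha>" "\<alpha> < 2" "0 < R"
  shows "convex_on {-R..R} (\<lambda>x. \<bar>x\<bar> powr \<alpha> - \<alpha>*(\<alpha>-1)*R powr (\<alpha>-2) / 2 * x^2)"
proof -
  define \<kappa> where "\<kappa> = \<alpha>*(\<alpha>-1)*R powr (\<alpha>-2)"
  define q where "q t = \<alpha> * t powr (\<alpha> - 1) - \<kappa> * t" for t
  have qm: "q x \<le> q y" if "0 \<le> x" "x \<le> y" "y \<le> R" for x y
    using qmono[OF assms(1,2) that] unfolding q_def \<kappa>_def .
  have q0: "q 0 = 0" by (simp add: q_def)
  show ?thesis unfolding \<kappa>_def[symmetric]
  proof (rule convex_on_realI[where f'="\<lambda>x. if x \<ge> 0 then q x else - q (-x)"])
    show "connected {-R..R}" by simp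
  next
    fix x :: real assume "x \<in> {-R..R}"
    have D: "((\<lambda>x. \<bar>x\<bar> powr \<alpha>) has_real_derivative (if x \<ge> 0 then \<alpha> * x powr (\<alpha> - 1) else - (\<alpha> * (-x) powr (\<alpha> - 1)))) (at x)"
    proof (cases x "0::real" rule: linorder_cases)
      case less thus ?thesis using dneg[OF less] by simp
    next
      case equal thus ?thesis using d0[OF assms(1)] assms by simp
    next
      case greater thus ?thesis using dpos[OF greater] by simp
    qed
    have "((\<lambda>x. \<bar>x\<bar> powr \<alpha> - \<kappa> / 2 * x^2) has_real_derivative
       (if x \<ge> 0 then \<alpha> * x powr (\<alpha> - 1) else - (\<alpha> * (-x) powr (\<alpha> - 1))) - \<kappa>/2 * (2 * x)) (at x)"
    proof -
      have D2: "((\<lambda>x. \<kappa>/2*x^2) has_real_derivative \<kappa>/2*(2*x)) (at x)"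
        by (auto intro!: derivative_eq_intros)
      show ?thesis using DERIV_diff[OF D D2] by simp
    qed
    moreover have "(if x \<ge> 0 then \<alpha> * x powr (\<alpha> - 1) else - (\<alpha> * (-x) powr (\<alpha> - 1))) - \<kappa>/2 * (2 * x) = (if x \<ge> 0 then q x else - q (-x))"
      by (simp add: q_def)
    ultimately show "((\<lambda>x. \<bar>x\<bar> powr \<alpha> - \<kappa> / 2 * x^2) has_real_derivative (if x \<ge> 0 then q x else - q (-x))) (at x)"
      by simp
  next
    fix x y :: real assume xy: "x \<in> {-R..R}" "y \<in> {-R..R}" "x \<le> y"
    show "(if x \<ge> 0 then q x else - q (-x)) \<le> (if y \<ge> 0 then q y else - q (-y))"
    proof (cases "0 \<le> x")
      case True thus ?thesis using xy qm by auto
    next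
      case False
      show ?thesis
      proof (cases "0 \<le> y")
        case True
        have "q 0 \<le> q y" "q 0 \<le> q (-x)" using True False xy by (auto intro!: qm)
        thus ?thesis using True False q0 by auto
      next
        case F2: False
        have "q (-y) \<le> q (-x)" using F2 False xy by (auto intro!: qm)
        thus ?thesis using F2 False by auto
      qed
    qed
  qed
qed

lemma alg3:
  fixes a b c fa fb fc k :: real
  assumes "(c-a)*(fb - k/2*b^2) \<le> (fc - k/2*c^2 - (fa - k/2*a^2))*(b-a) + (c-a)*(fa - k/2*a^2)"
  shows "(c-a)*fb + k/2*(b-a)*(c-b)*(c-a) \<le> (c-b)*fa + (b-a)*fc"
proof -
  have "(c-b)*fa + (b-a)*fc - ((c-a)*fb + k/2*(b-a)*(c-b)*(c-a)) =
        (fc - k/2*c^2 - (fa - k/2*a^2))*(b-a) + (c-a)*(fa - k/2*a^2) - (c-a)*(fb - k/2*b^2)"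
    by (simp add: field_simps power2_eq_square)
  thus ?thesis using assms by linarith
qed

lemma three_point:
  fixes \<alpha> R a b c :: real
  assumes "1 < \<alpha>" "\<alpha> < 2" "0 < R" "a < b" "b < c" "\<bar>a\<bar> \<le> R" "\<bar>c\<bar> \<le> R"
  shows "(c-a) * \<bar>b\<bar> powr \<alpha> + \<alpha>*(\<alpha>-1)*R powr (\<alpha>-2) / 2 * (b-a) * (c-b) * (c-a)
           \<le> (c-b) * \<bar>a\<bar> powr \<alpha> + (b-a) * \<bar>c\<bar> powr \<alpha>"
proof -
  define \<kappa> where "\<kappa> = \<alpha>*(\<alpha>-1)*R powr (\<alpha>-2)"
  define h where "h x = \<bar>x\<bar> powr \<alpha> - \<kappa> / 2 * x^2" for x
  have sub: "{a..c} \<subseteq> {-R..R}" using assms by auto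
  have "convex_on {a..c} h"
    using convex_on_subset[OF hconv[OF assms(1-3)] sub]
    unfolding h_def \<kappa>_def by auto
  from convex_onD_Icc'[OF this, of b] assms
  have "h b \<le> (h c - h a) / (c - a) * (b - a) + h a" by simp
  then have "(c-a) * h b \<le> (h c - h a) * (b - a) + (c-a) * h a"
    using assms by (simp add: field_simps)
  then show ?thesis unfolding h_def \<kappa>_def[symmetric]
    by (rule alg3)
qed

lemma sorted_gap:
  fixes xs :: "int list"
  assumes "sorted_wrt (<) xs" "i \<le> j" "j < length xs"
  shows "xs ! j - xs ! i \<ge> int (j - i)"
  using assms(2,3)
proof (induction j)
  case 0 thus ?case by simp
next
  case (Suc j)
  show ?case
  proof (cases "i = Suc j")
    case True thus ?thesis by simp
  next
    case False
    then have "i \<le> j" using Suc by simp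
    then have "xs ! j - xs ! i \<ge> int (j - i)" using Suc by simp
    moreover have "xs ! j < xs ! Suc j"
      using assms(1) Suc.prems by (simp add: sorted_wrt_iff_nth_less)
    ultimately show ?thesis using \<open>i \<le> j\<close> by auto
  qed
qed

lemma count_three:
  fixes X :: "int set" and K D :: real
  assumes "finite X" "0 < K" "0 \<le> D"
    and H: "\<And>a b c. a \<in> X \<Longrightarrow> b \<in> X \<Longrightarrow> c \<in> X \<Longrightarrow> a < b \<Longrightarrow> b < c \<Longrightarrow>
              K * (b - a) * (c - b) \<le> D"
  shows "real (card X) \<le> 2 * sqrt (D / K) + 2"
proof (cases "card X \<le> 2")
  case True
  have "0 \<le> sqrt (D/K)" using assms by simp
  thus ?thesis using True by linarith
next
  case False
  define n where "n = card X"
  define xs where "xs = sorted_list_of_set X"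
  have len: "length xs = n" unfolding xs_def n_def by simp
  have sw: "sorted_wrt (<) xs" unfolding xs_def by (simp add: strict_sorted_list_of_set)
  have setxs: "set xs = X" unfolding xs_def using assms(1) by simp
  define t where "t = (n - 1) div 2"
  have n3: "n \<ge> 3" using False n_def by simp
  have t1: "t \<ge> 1" "t < n - 1" "n - 1 - t \<ge> t" "n \<le> 2 * t + 2" using n3 unfolding t_def by auto
  define a where "a = xs ! 0"
  define b where "b = xs ! t"
  define c where "c = xs ! (n - 1)"
  have ab: "b - a \<ge> int t" using sorted_gap[OF sw, of 0 t] t1 len unfolding a_def b_def by simp
  have bc: "c - b \<ge> int t" using sorted_gap[OF sw, of t "n-1"] t1 len n3 unfolding c_def b_def by simp
  have inX: "a \<in> X" "b \<in> X" "c \<in> X" unfolding a_def b_def c_def setxs[symmetric]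
    using len t1 n3 by auto
  have "K * (b - a) * (c - b) \<le> D" using H[OF inX] ab bc t1 by simp
  moreover have "K * real t * real t \<le> K * (b - a) * (c - b)"
  proof -
    have "real t \<le> real_of_int (b - a)" "real t \<le> real_of_int (c - b)" using ab bc by linarith+
    then show ?thesis using assms(2)
      by (intro mult_mono) (auto intro: mult_left_mono)
  qed
  ultimately have "K * (real t)^2 \<le> D" by (simp add: power2_eq_square mult.assoc)
  then have "(real t)^2 \<le> D / K" using assms(2) by (simp add: field_simps mult.commute)
  then have "real t \<le> sqrt (D / K)" using real_le_rsqrt by blast
  moreover have "real n \<le> 2 * real t + 2" using t1 by linarith
  ultimately show ?thesis unfolding n_def by linarith
qed

lemma g_ineq:
  fixes \<alpha> P Q s A C0 a b c :: real
  assumes "1 < \<alpha>" "\<alpha> < 2" "1 \<le> P" "1 \<le> Q" "a < b" "b < c"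
    "\<bar>a\<bar> \<le> P" "\<bar>c\<bar> \<le> P" "\<bar>s - a\<bar> \<le> Q" "\<bar>s - c\<bar> \<le> Q"
    "\<bar>\<bar>a\<bar> powr \<alpha> + \<bar>s - a\<bar> powr \<alpha> - A\<bar> \<le> C0"
    "\<bar>\<bar>b\<bar> powr \<alpha> + \<bar>s - b\<bar> powr \<alpha> - A\<bar> \<le> C0"
    "\<bar>\<bar>c\<bar> powr \<alpha> + \<bar>s - c\<bar> powr \<alpha> - A\<bar> \<le> C0"
  shows "\<alpha>*(\<alpha>-1)*(min P Q) powr (\<alpha>-2) * (b-a) * (c-b) \<le> 4 * C0"
proof -
  define kP where "kP = \<alpha>*(\<alpha>-1)*P powr (\<alpha>-2)"
  define kQ where "kQ = \<alpha>*(\<alpha>-1)*Q powr (\<alpha>-2)"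
  define kM where "kM = \<alpha>*(\<alpha>-1)*(min P Q) powr (\<alpha>-2)"
  have kP0: "kP \<ge> 0" "kQ \<ge> 0" using assms unfolding kP_def kQ_def by auto
  have kM: "kM \<le> kP + kQ"
    using kP0 unfolding kM_def kP_def kQ_def by (cases "P \<le> Q") (auto simp: min_def)
  have T1: "(c-a) * \<bar>b\<bar> powr \<alpha> + kP / 2 * (b-a) * (c-b) * (c-a)
           \<le> (c-b) * \<bar>a\<bar> powr \<alpha> + (b-a) * \<bar>c\<bar> powr \<alpha>"
    unfolding kP_def using three_point[of \<alpha> P a b c] assms by simp
  have T2: "((s-a)-(s-c)) * \<bar>s-b\<bar> powr \<alpha> + kQ / 2 * ((s-b)-(s-c)) * ((s-a)-(s-b)) * ((s-a)-(s-c))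
           \<le> ((s-a)-(s-b)) * \<bar>s-c\<bar> powr \<alpha> + ((s-b)-(s-c)) * \<bar>s-a\<bar> powr \<alpha>"
    unfolding kQ_def using three_point[of \<alpha> Q "s-c" "s-b" "s-a"] assms by simp
  define X where "X = (b-a) * (c-b) * (c-a)"
  have T1': "(c-a) * \<bar>b\<bar> powr \<alpha> + kP / 2 * X \<le> (c-b) * \<bar>a\<bar> powr \<alpha> + (b-a) * \<bar>c\<bar> powr \<alpha>"
    using T1 unfolding X_def by (simp add: mult.assoc)
  have e1: "(s-a)-(s-c) = c - a" "(s-b)-(s-c) = c-b" "(s-a)-(s-b) = b-a" by simp_all
  have T2': "(c-a) * \<bar>s-b\<bar> powr \<alpha> + kQ / 2 * X \<le> (b-a) * \<bar>s-c\<bar> powr \<alpha> + (c-b) * \<bar>s-a\<bar> powr \<alpha>"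
    using T2 unfolding e1 X_def by (simp add: mult.assoc mult.left_commute)
  define ga where "ga = \<bar>a\<bar> powr \<alpha> + \<bar>s - a\<bar> powr \<alpha>"
  define gb where "gb = \<bar>b\<bar> powr \<alpha> + \<bar>s - b\<bar> powr \<alpha>"
  define gc where "gc = \<bar>c\<bar> powr \<alpha> + \<bar>s - c\<bar> powr \<alpha>"
  have d: "(kP + kQ) / 2 * X = kP/2*X + kQ/2*X" by (simp add: algebra_simps)
  have S0: "(c-a) * gb + (kP + kQ) / 2 * X \<le> (c-b) * ga + (b-a) * gc"
  proof -
    have "(c-a) * gb = (c-a) * \<bar>b\<bar> powr \<alpha> + (c-a) * \<bar>s-b\<bar> powr \<alpha>"
         "(c-b) * ga = (c-b) * \<bar>a\<bar> powr \<alpha> + (c-b) * \<bar>s-a\<bar> powr \<alpha>"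
         "(b-a) * gc = (b-a) * \<bar>c\<bar> powr \<alpha> + (b-a) * \<bar>s-c\<bar> powr \<alpha>"
      unfolding ga_def gb_def gc_def by (simp_all add: distrib_left)
    then show ?thesis using T1' T2' d by linarith
  qed
  have ga: "ga \<le> A + C0" using assms(11) unfolding ga_def by linarith
  have gc: "gc \<le> A + C0" using assms(13) unfolding gc_def by linarith
  have gb: "A - C0 \<le> gb" using assms(12) unfolding gb_def by linarith
  have p1: "(c-b) * ga \<le> (c-b) * (A + C0)" using ga assms(6) by (intro mult_left_mono) auto
  have p2: "(b-a) * gc \<le> (b-a) * (A + C0)" using gc assms(5) by (intro mult_left_mono) auto
  have p3: "(c-a) * (A - C0) \<le> (c-a) * gb" using gb assms(5,6) by (intro mult_left_mono) auto
  have e2: "(c-b) * (A + C0) + (b-a) * (A + C0) = (c-a) * (A - C0) + (c-a) * (2 * C0)"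
    by (simp add: algebra_simps)
  define Y where "Y = (b-a) * (c-b)"
  have XY: "((kP + kQ) / 2 * Y) * (c-a) = (kP + kQ) / 2 * X"
    unfolding X_def Y_def by (simp add: mult.assoc)
  have "(kP + kQ) / 2 * X \<le> (c-a) * (2 * C0)" using S0 p1 p2 p3 e2 by linarith
  then have "((kP + kQ) / 2 * Y) * (c-a) \<le> (2 * C0) * (c-a)"
    unfolding XY by (simp add: mult.commute)
  then have "(kP + kQ) / 2 * Y \<le> 2 * C0" using assms(5,6) by simp
  moreover have "kM * Y \<le> (kP + kQ) * Y"
    using kM assms(5,6) unfolding Y_def by (intro mult_right_mono) auto
  ultimately have "kM * Y \<le> 4 * C0" by linarith
  then show ?thesis unfolding kM_def Y_def by (simp add: mult.assoc)
qed

lemma sqrt_scale: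
  fixes \<alpha> M C0 :: real
  assumes "1 < \<alpha>" "\<alpha> < 2" "1 \<le> M" "0 < C0"
  shows "2 * sqrt (4 * C0 / (\<alpha>*(\<alpha>-1)*M powr (\<alpha>-2))) + 2
         \<le> (2 * sqrt (4 * C0 / (\<alpha>*(\<alpha>-1))) + 2) * M powr (1 - \<alpha>/2)"
proof -
  have M0: "0 < M" using assms by simp
  have "4 * C0 / (\<alpha>*(\<alpha>-1)*M powr (\<alpha>-2)) = (4 * C0 / (\<alpha>*(\<alpha>-1))) * M powr (2 - \<alpha>)"
    using M0 by (simp add: powr_diff field_simps powr_minus_divide)
  note eq0 = this
  have "sqrt (4 * C0 / (\<alpha>*(\<alpha>-1)*M powr (\<alpha>-2))) = sqrt (4 * C0 / (\<alpha>*(\<alpha>-1))) * sqrt (M powr (2 - \<alpha>))"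
    unfolding eq0 by (rule real_sqrt_mult)
  also have "sqrt (M powr (2 - \<alpha>)) = M powr (1 - \<alpha>/2)"
    using M0 by (simp add: sqrt_def powr_powr[symmetric] root_powr_inverse powr_powr field_simps
        flip: powr_half_sqrt)
  finally have e: "sqrt (4 * C0 / (\<alpha>*(\<alpha>-1)*M powr (\<alpha>-2))) = sqrt (4 * C0 / (\<alpha>*(\<alpha>-1))) * M powr (1 - \<alpha>/2)" .
  have "1 \<le> M powr (1 - \<alpha>/2)" using assms by (intro ge_one_powr_ge_zero) auto
  then show ?thesis unfolding e by (simp add: algebra_simps)
qed

lemma card_bound:
  fixes \<alpha> C0 P Q A :: real and s :: int and X :: "int set"
  assumes "1 < \<alpha>" "\<alpha> < 2" "0 < C0" "1 \<le> P" "1 \<le> Q"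
    and X: "\<And>x. x \<in> X \<Longrightarrow> \<bar>real_of_int x\<bar> \<le> P \<and> \<bar>real_of_int s - real_of_int x\<bar> \<le> Q \<and>
          \<bar>\<bar>real_of_int x\<bar> powr \<alpha> + \<bar>real_of_int s - real_of_int x\<bar> powr \<alpha> - A\<bar> \<le> C0"
  shows "finite X"
    and "real (card X) \<le> (2 * sqrt (4 * C0 / (\<alpha>*(\<alpha>-1))) + 2) * (min P Q) powr (1 - \<alpha>/2)"
proof -
  have "X \<subseteq> {-\<lceil>P\<rceil>..\<lceil>P\<rceil>}"
  proof
    fix x assume "x \<in> X"
    then have "\<bar>real_of_int x\<bar> \<le> P" using X by blast
    then show "x \<in> {-\<lceil>P\<rceil>..\<lceil>P\<rceil>}" by (auto simp: abs_le_iff ceiling_le_iff le_ceiling_iff) linarith+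
  qed
  then show fin: "finite X" using finite_subset by blast
  define M where "M = min P Q"
  have M1: "1 \<le> M" using assms unfolding M_def by simp
  define K where "K = \<alpha>*(\<alpha>-1)*M powr (\<alpha>-2)"
  have K0: "0 < K" using assms M1 unfolding K_def by simp
  have "real (card X) \<le> 2 * sqrt (4 * C0 / K) + 2"
  proof (rule count_three[OF fin K0])
    show "0 \<le> 4 * C0" using assms by simp
  next
    fix a b c assume abc: "a \<in> X" "b \<in> X" "c \<in> X" "a < b" "b < c"
    have "\<alpha>*(\<alpha>-1)*(min P Q) powr (\<alpha>-2) * (real_of_int b - real_of_int a) * (real_of_int c - real_of_int b) \<le> 4 * C0"
      using abc(4,5) X[OF abc(1)] X[OF abc(2)] X[OF abc(3)]
      by (intro g_ineq[OF assms(1,2,4,5), where s="real_of_int s" and A=A]) auto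
    then show "K * real_of_int (b - a) * real_of_int (c - b) \<le> 4 * C0"
      unfolding K_def M_def by simp
  qed
  also have "\<dots> \<le> (2 * sqrt (4 * C0 / (\<alpha>*(\<alpha>-1))) + 2) * M powr (1 - \<alpha>/2)"
    unfolding K_def by (rule sqrt_scale[OF assms(1,2) M1 assms(3)])
  finally show "real (card X) \<le> (2 * sqrt (4 * C0 / (\<alpha>*(\<alpha>-1))) + 2) * (min P Q) powr (1 - \<alpha>/2)"
    unfolding M_def .
qed

lemma kk2_bound:
  fixes \<alpha> C0 N N1 N2 N3 m :: real and k k2 :: int
  assumes "1 < \<alpha>" "\<alpha> < 2" "0 < C0" "1 \<le> N1" "1 \<le> N3"
  shows "finite (S_kk2 \<alpha> N N1 N2 N3 m C0 k k2)"
    and "real (card (S_kk2 \<alpha> N N1 N2 N3 m C0 k k2))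
          \<le> (2 * sqrt (4 * C0 / (\<alpha>*(\<alpha>-1))) + 2) * (min N1 N3) powr (1 - \<alpha>/2)"
proof -
  define S where "S = S_kk2 \<alpha> N N1 N2 N3 m C0 k k2"
  define s where "s = k + k2"
  define A where "A = \<bar>real_of_int k2\<bar> powr \<alpha> + \<bar>real_of_int k\<bar> powr \<alpha> + m"
  have mem: "k3 = s - k1 \<and> \<bar>real_of_int k1\<bar> \<le> N1 \<and> \<bar>real_of_int s - real_of_int k1\<bar> \<le> N3 \<and>
          \<bar>\<bar>real_of_int k1\<bar> powr \<alpha> + \<bar>real_of_int s - real_of_int k1\<bar> powr \<alpha> - A\<bar> \<le> C0"
    if "(k1, k3) \<in> S" for k1 k3
  proof -
    from that have H: "k = k1 - k2 + k3"
      "\<bar>\<bar>real_of_int k1\<bar> powr \<alpha> - \<bar>real_of_int k2\<bar> powr \<alpha> + \<bar>real_of_int k3\<bar> powr \<alpha>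
        - \<bar>real_of_int k\<bar> powr \<alpha> - m\<bar> \<le> C0"
      "\<bar>real_of_int k1\<bar> \<le> N1" "\<bar>real_of_int k3\<bar> \<le> N3"
      unfolding S_def S_kk2_def Sset_def by auto
    have k3: "k3 = s - k1" using H(1) unfolding s_def by simp
    have r: "real_of_int s - real_of_int k1 = real_of_int k3" using k3 by simp
    show ?thesis using H unfolding r A_def
      by (simp add: k3 algebra_simps)
  qed
  have inj: "inj_on fst S"
    by (rule inj_onI) (metis mem prod.collapse)
  have Xb: "\<And>x. x \<in> fst ` S \<Longrightarrow> \<bar>real_of_int x\<bar> \<le> N1 \<and> \<bar>real_of_int s - real_of_int x\<bar> \<le> N3 \<and>
          \<bar>\<bar>real_of_int x\<bar> powr \<alpha> + \<bar>real_of_int s - real_of_int x\<bar> powr \<alpha> - A\<bar> \<le> C0"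
    using mem by force
  note cb = card_bound[OF assms, of "fst ` S" s A, OF Xb]
  show "finite (S_kk2 \<alpha> N N1 N2 N3 m C0 k k2)"
    using cb(1) inj finite_image_iff unfolding S_def by blast
  show "real (card (S_kk2 \<alpha> N N1 N2 N3 m C0 k k2))
          \<le> (2 * sqrt (4 * C0 / (\<alpha>*(\<alpha>-1))) + 2) * (min N1 N3) powr (1 - \<alpha>/2)"
    using cb(2) card_image[OF inj] unfolding S_def by simp
qed

lemma k1k3_bound:
  fixes \<alpha> C0 N N1 N2 N3 m :: real and k1 k3 :: int
  assumes "1 < \<alpha>" "\<alpha> < 2" "0 < C0" "1 \<le> N" "1 \<le> N2"
  shows "finite (S_k1k3 \<alpha> N N1 N2 N3 m C0 k1 k3)"
    and "real (card (S_k1k3 \<alpha> N N1 N2 N3 m C0 k1 k3))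
          \<le> (2 * sqrt (4 * C0 / (\<alpha>*(\<alpha>-1))) + 2) * (min N N2) powr (1 - \<alpha>/2)"
proof -
  define S where "S = S_k1k3 \<alpha> N N1 N2 N3 m C0 k1 k3"
  define s where "s = k1 + k3"
  define A where "A = \<bar>real_of_int k1\<bar> powr \<alpha> + \<bar>real_of_int k3\<bar> powr \<alpha> - m"
  have mem: "k2 = s - k \<and> \<bar>real_of_int k\<bar> \<le> N \<and> \<bar>real_of_int s - real_of_int k\<bar> \<le> N2 \<and>
          \<bar>\<bar>real_of_int k\<bar> powr \<alpha> + \<bar>real_of_int s - real_of_int k\<bar> powr \<alpha> - A\<bar> \<le> C0"
    if "(k, k2) \<in> S" for k k2
  proof -
    from that have M: "(k, k1, k2, k3) \<in> Sset \<alpha> N N1 N2 N3 m C0"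
      unfolding S_def S_k1k3_def by simp
    have C: "k = k1 - k2 + k3 \<and> k2 \<noteq> k1 \<and> k2 \<noteq> k3 \<and>
      \<bar>\<bar>real_of_int k1\<bar> powr \<alpha> - \<bar>real_of_int k2\<bar> powr \<alpha> + \<bar>real_of_int k3\<bar> powr \<alpha>
        - \<bar>real_of_int k\<bar> powr \<alpha> - m\<bar> \<le> C0 \<and>
      \<bar>real_of_int k\<bar> \<le> N \<and> \<bar>real_of_int k1\<bar> \<le> N1 \<and>
      \<bar>real_of_int k2\<bar> \<le> N2 \<and> \<bar>real_of_int k3\<bar> \<le> N3"
      using M unfolding Sset_def mem_Collect_eq case_prod_conv .
    note H = C[THEN conjunct1] C[THEN conjunct2, THEN conjunct2, THEN conjunct2, THEN conjunct1] C[THEN conjunct2, THEN conjunct2, THEN conjunct2, THEN conjunct2, THEN conjunct1] C[THEN conjunct2, THEN conjunct2, THEN conjunct2, THEN conjunct2, THEN conjunct2, THEN conjunct2, THEN conjunct1]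
    have k2: "k2 = s - k" using H(1) unfolding s_def by simp
    have r: "real_of_int s - real_of_int k = real_of_int k2" using k2 by simp
    have "\<bar>\<bar>real_of_int k\<bar> powr \<alpha> + \<bar>real_of_int k2\<bar> powr \<alpha> - A\<bar> =
          \<bar>\<bar>real_of_int k1\<bar> powr \<alpha> - \<bar>real_of_int k2\<bar> powr \<alpha> + \<bar>real_of_int k3\<bar> powr \<alpha>
        - \<bar>real_of_int k\<bar> powr \<alpha> - m\<bar>"
    proof -
      have "\<bar>real_of_int k\<bar> powr \<alpha> + \<bar>real_of_int k2\<bar> powr \<alpha> - A =
          - (\<bar>real_of_int k1\<bar> powr \<alpha> - \<bar>real_of_int k2\<bar> powr \<alpha> + \<bar>real_of_int k3\<bar> powr \<alpha>
        - \<bar>real_of_int k\<bar> powr \<alpha> - m)" unfolding A_def by (simp add: algebra_simps)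
      then show ?thesis by (simp only: abs_minus_cancel)
    qed
    note e = this
    show ?thesis unfolding r e by (intro conjI k2 H(2) H(3) H(4))
  qed
  have inj: "inj_on fst S"
    by (rule inj_onI) (metis mem prod.collapse)
  have Xb: "\<And>x. x \<in> fst ` S \<Longrightarrow> \<bar>real_of_int x\<bar> \<le> N \<and> \<bar>real_of_int s - real_of_int x\<bar> \<le> N2 \<and>
          \<bar>\<bar>real_of_int x\<bar> powr \<alpha> + \<bar>real_of_int s - real_of_int x\<bar> powr \<alpha> - A\<bar> \<le> C0"
    using mem by force
  note cb = card_bound[OF assms, of "fst ` S" s A, OF Xb]
  show "finite (S_k1k3 \<alpha> N N1 N2 N3 m C0 k1 k3)"
    using cb(1) inj finite_image_iff unfolding S_def by blast
  show "real (card (S_k1k3 \<alpha> N N1 N2 N3 m C0 k1 k3))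
          \<le> (2 * sqrt (4 * C0 / (\<alpha>*(\<alpha>-1))) + 2) * (min N N2) powr (1 - \<alpha>/2)"
    using cb(2) card_image[OF inj] unfolding S_def by simp
qed

theorem corollary2p8:
  fixes \<alpha> c C0 :: real
  assumes "1 < \<alpha>" "\<alpha> < 2" "0 < c" "c < 1" "0 < C0"
  shows "\<exists>C>0. \<forall>N N1 N2 N3 m k k1 k2 k3.
           dyadic N \<and> dyadic N1 \<and> dyadic N2 \<and> dyadic N3 \<and>
           1 \<le> N1 \<and> N1 \<le> N \<and> 1 \<le> N2 \<and> N2 \<le> N \<and> 1 \<le> N3 \<and> N3 \<le> N \<longrightarrow>
             real (card (S_kk2_bad c \<alpha> N N1 N2 N3 m C0 k k2))
               \<le> C * (min N1 N3) powr (1 - \<alpha> / 2) \<and>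
             real (card (S_k1k3_bad c \<alpha> N N1 N2 N3 m C0 k1 k3))
               \<le> C * (min N N2) powr (1 - \<alpha> / 2) \<and>
             real (card (S_kk2 \<alpha> N N1 N2 N3 m C0 k k2))
               \<le> C * (min N1 N3) powr (1 - \<alpha> / 2) \<and>
             real (card (S_k1k3 \<alpha> N N1 N2 N3 m C0 k1 k3))
               \<le> C * (min N N2) powr (1 - \<alpha> / 2)"
proof (intro exI[of _ "2 * sqrt (4 * C0 / (\<alpha>*(\<alpha>-1))) + 2"] conjI allI impI)
  have "0 \<le> sqrt (4 * C0 / (\<alpha>*(\<alpha>-1)))"
    using assms by (intro real_sqrt_ge_zero divide_nonneg_pos) auto
  then show "0 < 2 * sqrt (4 * C0 / (\<alpha>*(\<alpha>-1))) + 2" by linarith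
  fix N N1 N2 N3 m :: real and k k1 k2 k3 :: int
  assume H: "dyadic N \<and> dyadic N1 \<and> dyadic N2 \<and> dyadic N3 \<and>
           1 \<le> N1 \<and> N1 \<le> N \<and> 1 \<le> N2 \<and> N2 \<le> N \<and> 1 \<le> N3 \<and> N3 \<le> N"
  have h1: "1 \<le> N1" "1 \<le> N3" "1 \<le> N" "1 \<le> N2" using H by auto
  note A = kk2_bound[OF assms(1,2,5) h1(1,2), of N N2 m k k2]
  note B = k1k3_bound[OF assms(1,2,5) h1(3,4), of N1 N3 m k1 k3]
  have sub1: "S_kk2_bad c \<alpha> N N1 N2 N3 m C0 k k2 \<subseteq> S_kk2 \<alpha> N N1 N2 N3 m C0 k k2"
    unfolding S_kk2_bad_def by auto
  have sub2: "S_k1k3_bad c \<alpha> N N1 N2 N3 m C0 k1 k3 \<subseteq> S_k1k3 \<alpha> N N1 N2 N3 m C0 k1 k3"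
    unfolding S_k1k3_bad_def by auto
  have c1: "card (S_kk2_bad c \<alpha> N N1 N2 N3 m C0 k k2) \<le> card (S_kk2 \<alpha> N N1 N2 N3 m C0 k k2)"
    by (rule card_mono[OF A(1) sub1])
  have c2: "card (S_k1k3_bad c \<alpha> N N1 N2 N3 m C0 k1 k3) \<le> card (S_k1k3 \<alpha> N N1 N2 N3 m C0 k1 k3)"
    by (rule card_mono[OF B(1) sub2])
  show "real (card (S_kk2 \<alpha> N N1 N2 N3 m C0 k k2))
               \<le> (2 * sqrt (4 * C0 / (\<alpha>*(\<alpha>-1))) + 2) * (min N1 N3) powr (1 - \<alpha> / 2)"
    using A(2) by simp
  show "real (card (S_k1k3 \<alpha> N N1 N2 N3 m C0 k1 k3))
               \<le> (2 * sqrt (4 * C0 / (\<alpha>*(\<alpha>-1))) + 2) * (min N N2) powr (1 - \<alpha> / 2)"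
    using B(2) by simp
  show "real (card (S_kk2_bad c \<alpha> N N1 N2 N3 m C0 k k2))
               \<le> (2 * sqrt (4 * C0 / (\<alpha>*(\<alpha>-1))) + 2) * (min N1 N3) powr (1 - \<alpha> / 2)"
    using A(2) c1 by (meson of_nat_le_iff order_trans)
  show "real (card (S_k1k3_bad c \<alpha> N N1 N2 N3 m C0 k1 k3))
               \<le> (2 * sqrt (4 * C0 / (\<alpha>*(\<alpha>-1))) + 2) * (min N N2) powr (1 - \<alpha> / 2)"
    using B(2) c2 by (meson of_nat_le_iff order_trans)
qed

end
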